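(* Let $(X,d,G)$ be a $G$-system, $\{F_n\}$ a Følner sequence of $G$, and $Z$ a nonempty subset of $X$. Then: (1) if $h_{top}(G,Z,\{F_n\})=\infty$ and $\overline{\mathrm{mdim}}_M(G,Z,\{F_n\},d)<\infty$, then $\overline{D}_M(G,Z,\{F_n\},d)\le1\le D(G,Z,\{F_n\})$; (2) if $0<\overline{\mathrm{mdim}}_M(G,Z,\{F_n\},d)<\infty$, then $\overline{D}_M(G,Z,\{F_n\},d)=1=D(G,Z,\{F_n\})$.
   Context: $G$ is a countably infinite discrete amenable group; $(X,d,G)$ a compact metric space with continuous $G$-action by homeomorphisms; $\{F_n\}$ nonempty finite subsets of $G$ with $|gF_n\triangle F_n|/|F_n|\to0$ for all $g$. $d_F(x,y)=\max_{g\in F}d(gx,gy)$; $s(Z,d_F,\epsilon)$ maximal cardinality of a subset of $Z$ with pairwise $d_F$-distances $>\epsilon$; $h_{top}(G,Z,d,\{F_n\},\epsilon)=\limsup_n\frac1{|F_n|}\log s(Z,d_{F_n},\epsilon)$ and $h_{top}(G,Z,\{F_n\})=\lim_{\epsilon\to0}h_{top}(G,Z,d,\{F_n\},\epsilon)$. For $s>0$: $h_{top}(G,Z,s,\{F_n\})=\lim_{\epsilon\to0}\limsup_n\frac{\log s(Z,d_{F_n},\epsilon)}{|F_n|^s}$ and the entropy dimension is $D(G,Z,\{F_n\})=\inf\{s>0:h_{top}(G,Z,s,\{F_n\})=0\}$; $\overline{\mathrm{mdim}}_M(G,Z,\{F_n\},s,d)=\limsup_{\epsilon\to0}h_{top}(G,Z,d,\{F_n\},\epsilon)/(\log\frac1\epsilon)^s$,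 $\overline{\mathrm{mdim}}_M(G,Z,\{F_n\},d)$ is the case $s=1$, and $\overline{D}_M(G,Z,\{F_n\},d)=\inf\{s>0:\overline{\mathrm{mdim}}_M(G,Z,\{F_n\},s,d)=0\}$. *)

theory Defs
  imports "HOL-Analysis.Analysis" "HOL-Algebra.Group_Action" "HOL-Library.Liminf_Limsup"
begin

definition folner :: "('g, 'b) monoid_scheme \<Rightarrow> (nat \<Rightarrow> 'g set) \<Rightarrow> bool" where
  "folner G F \<longleftrightarrow>
     (\<forall>n. F n \<subseteq> carrier G \<and> finite (F n) \<and> F n \<noteq> {}) \<and>
     (\<forall>g\<in>carrier G.
        (\<lambda>n. real (card (((g <#\<^bsub>G\<^esub> F n) - F n) \<union> (F n - (g <#\<^bsub>G\<^esub> F n))))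
             / real (card (F n))) \<longlonglongrightarrow> 0)"

definition amenable :: "('g, 'b) monoid_scheme \<Rightarrow> bool" where
  "amenable G \<longleftrightarrow> (\<exists>F. folner G F)"

definition dF :: "('g \<Rightarrow> 'x \<Rightarrow> 'x) \<Rightarrow> 'g set \<Rightarrow> 'x::metric_space \<Rightarrow> 'x \<Rightarrow> real" where
  "dF \<phi> F x y = Max ((\<lambda>g. dist (\<phi> g x) (\<phi> g y)) ` F)"

definition sep_num :: "('g \<Rightarrow> 'x \<Rightarrow> 'x) \<Rightarrow> 'g set \<Rightarrow> 'x::metric_space set \<Rightarrow> real \<Rightarrow> real" where
  "sep_num \<phi> F Z eps = Sup {real (card S) | S. S \<subseteq> Z \<and> finite S \<and>
        (\<forall>x\<in>S. \<forall>y\<in>S. x \<noteq> y \<longrightarrow> dF \<phi> F x y > eps)}"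

definition htop_eps :: "('g \<Rightarrow> 'x \<Rightarrow> 'x) \<Rightarrow> (nat \<Rightarrow> 'g set) \<Rightarrow> 'x::metric_space set \<Rightarrow> real \<Rightarrow> ereal" where
  "htop_eps \<phi> F Z eps = limsup (\<lambda>n. ereal (ln (sep_num \<phi> (F n) Z eps) / real (card (F n))))"

definition htop :: "('g \<Rightarrow> 'x \<Rightarrow> 'x) \<Rightarrow> (nat \<Rightarrow> 'g set) \<Rightarrow> 'x::metric_space set \<Rightarrow> ereal" where
  "htop \<phi> F Z = Lim (at_right 0) (htop_eps \<phi> F Z)"

definition htop_s :: "('g \<Rightarrow> 'x \<Rightarrow> 'x) \<Rightarrow> (nat \<Rightarrow> 'g set) \<Rightarrow> 'x::metric_space set \<Rightarrow> real \<Rightarrow> ereal" where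
  "htop_s \<phi> F Z s = Lim (at_right 0)
     (\<lambda>eps. limsup (\<lambda>n. ereal (ln (sep_num \<phi> (F n) Z eps) / (real (card (F n)) powr s))))"

definition entropy_dim :: "('g \<Rightarrow> 'x \<Rightarrow> 'x) \<Rightarrow> (nat \<Rightarrow> 'g set) \<Rightarrow> 'x::metric_space set \<Rightarrow> ereal" where
  "entropy_dim \<phi> F Z = Inf (ereal ` {s. s > 0 \<and> htop_s \<phi> F Z s = 0})"

definition mdim_M_s :: "('g \<Rightarrow> 'x \<Rightarrow> 'x) \<Rightarrow> (nat \<Rightarrow> 'g set) \<Rightarrow> 'x::metric_space set \<Rightarrow> real \<Rightarrow> ereal" where
  "mdim_M_s \<phi> F Z s = Limsup (at_right 0) (\<lambda>eps. htop_eps \<phi> F Z eps / ereal ((ln (1 / eps)) powr s))"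

definition mdim_M :: "('g \<Rightarrow> 'x \<Rightarrow> 'x) \<Rightarrow> (nat \<Rightarrow> 'g set) \<Rightarrow> 'x::metric_space set \<Rightarrow> ereal" where
  "mdim_M \<phi> F Z = Limsup (at_right 0) (\<lambda>eps. htop_eps \<phi> F Z eps / ereal (ln (1 / eps)))"

definition D_M :: "('g \<Rightarrow> 'x \<Rightarrow> 'x) \<Rightarrow> (nat \<Rightarrow> 'g set) \<Rightarrow> 'x::metric_space set \<Rightarrow> ereal" where
  "D_M \<phi> F Z = Inf (ereal ` {s. s > 0 \<and> mdim_M_s \<phi> F Z s = 0})"

end

theory Submission
  imports Defs
begin

lemma cover_exists:
  fixes X :: "'x::metric_space set"
  assumes "compact X" "e > 0"
  obtains C where "finite C" "C \<subseteq> X" "X \<subseteq> (\<Union>c\<in>C. ball c e)"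
  using compactE_image[OF assms(1), of X "\<lambda>c. ball c e"] assms(2) by (metis centre_in_ball open_ball UN_I subsetI)

lemma sep_card_bound:
  fixes \<phi> :: "'g \<Rightarrow> 'x::metric_space \<Rightarrow> 'x"
  assumes C: "finite C" "X \<subseteq> (\<Union>c\<in>C. ball c (eps/2))"
    and A: "finite A" "A \<noteq> {}" "\<forall>g\<in>A. \<forall>x\<in>X. \<phi> g x \<in> X"
    and S: "S \<subseteq> X" "\<forall>x\<in>S. \<forall>y\<in>S. x \<noteq> y \<longrightarrow> dF \<phi> A x y > eps"
  shows "card S \<le> card C ^ card A"
proof -
  define f where "f x = (\<lambda>g\<in>A. SOME c. c \<in> C \<and> \<phi> g x \<in> ball c (eps/2))" for x
  have fc: "f x g \<in> C \<and> \<phi> g x \<in> ball (f x g) (eps/2)" if "x \<in> X" "g \<in> A" for x g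
  proof -
    have "\<exists>c. c \<in> C \<and> \<phi> g x \<in> ball c (eps/2)" using A(3) C(2) that by blast
    then show ?thesis unfolding f_def using that(2) by (simp, metis (mono_tags, lifting) someI_ex)
  qed
  have inj: "inj_on f S"
  proof (rule inj_onI, rule ccontr)
    fix x y assume xy: "x \<in> S" "y \<in> S" "f x = f y" "x \<noteq> y"
    then have "dF \<phi> A x y > eps" using S by blast
    moreover have "dF \<phi> A x y \<in> (\<lambda>g. dist (\<phi> g x) (\<phi> g y)) ` A"
      unfolding dF_def using A by (intro Max_in) auto
    ultimately obtain g where g: "g \<in> A" "dist (\<phi> g x) (\<phi> g y) > eps" by auto
    have "x \<in> X" "y \<in> X" using xy S by auto
    then have "\<phi> g x \<in> ball (f x g) (eps/2)" "\<phi> g y \<in> ball (f x g) (eps/2)"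
      using fc g xy(3) by metis+
    then have "dist (\<phi> g x) (\<phi> g y) < eps"
      by (metis dist_commute dist_triangle_half_r mem_ball)
    then show False using g by simp
  qed
  have img: "f ` S \<subseteq> (\<Pi>\<^sub>E g\<in>A. C)" using fc S(1) unfolding f_def by (auto simp: PiE_def)
  have "card S = card (f ` S)" using card_image[OF inj] by simp
  also have "\<dots> \<le> card (\<Pi>\<^sub>E g\<in>A. C)"
    by (rule card_mono[OF _ img]) (simp add: finite_PiE A C)
  also have "\<dots> = card C ^ card A" using card_PiE[OF A(1), of "\<lambda>_. C"] by simp
  finally show ?thesis .
qed

locale setting =
  fixes \<phi> :: "'g \<Rightarrow> 'x::metric_space \<Rightarrow> 'x" and X Z :: "'x set" and F :: "nat \<Rightarrow> 'g set"
  assumes cpt: "compact X" and ZX: "Z \<subseteq> X" and Zne: "Z \<noteq> {}"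
    and Ffin: "\<And>n. finite (F n)" and Fne: "\<And>n. F n \<noteq> {}"
    and img: "\<And>n g x. g \<in> F n \<Longrightarrow> x \<in> X \<Longrightarrow> \<phi> g x \<in> X"
begin

definition sset where "sset A eps = {real (card S) | S. S \<subseteq> Z \<and> finite S \<and>
        (\<forall>x\<in>S. \<forall>y\<in>S. x \<noteq> y \<longrightarrow> dF \<phi> A x y > eps)}"

lemma sep_num_sset: "sep_num \<phi> A Z eps = Sup (sset A eps)"
  unfolding sep_num_def sset_def by simp

lemma cover_eps:
  assumes "eps > 0"
  obtains C where "finite C" "X \<subseteq> (\<Union>c\<in>C. ball c (eps/2))" "card C \<ge> 1"
proof -
  obtain C where C: "finite C" "C \<subseteq> X" "X \<subseteq> (\<Union>c\<in>C. ball c (eps/2))"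
    using cover_exists[OF cpt, of "eps/2"] assms by auto
  have "X \<noteq> {}" using ZX Zne by auto
  then have "C \<noteq> {}" using C(3) by auto
  then have "card C \<ge> 1" using C(1) by (simp add: Suc_leI card_gt_0_iff)
  then show ?thesis using that C by auto
qed

lemma sset_props:
  assumes C: "finite C" "X \<subseteq> (\<Union>c\<in>C. ball c (eps/2))"
  shows "\<forall>v\<in>sset (F n) eps. v \<le> real (card C ^ card (F n))" "1 \<in> sset (F n) eps"
proof -
  show "\<forall>v\<in>sset (F n) eps. v \<le> real (card C ^ card (F n))"
  proof
    fix v assume "v \<in> sset (F n) eps"
    then obtain S where S: "v = real (card S)" "S \<subseteq> Z" "\<forall>x\<in>S. \<forall>y\<in>S. x \<noteq> y \<longrightarrow> dF \<phi> (F n) x y > eps"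
      unfolding sset_def by auto
    have "card S \<le> card C ^ card (F n)"
      using sep_card_bound[OF C Ffin[of n] Fne[of n], where \<phi>=\<phi> and S=S] S ZX setting.img[OF setting_axioms] by (meson order_trans)
    then show "v \<le> real (card C ^ card (F n))" using S(1) by linarith
  qed
  obtain z where "z \<in> Z" using Zne by auto
  then show "1 \<in> sset (F n) eps" unfolding sset_def
    by (intro CollectI exI[of _ "{z}"]) auto
qed

lemma sep_num_bounds:
  assumes C: "finite C" "X \<subseteq> (\<Union>c\<in>C. ball c (eps/2))"
  shows "1 \<le> sep_num \<phi> (F n) Z eps" "sep_num \<phi> (F n) Z eps \<le> real (card C) ^ card (F n)"
    "bdd_above (sset (F n) eps)"
proof -
  note P = sset_props[OF C, of n]
  show bdd: "bdd_above (sset (F n) eps)" using P(1) by (auto simp: bdd_above_def)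
  show "1 \<le> sep_num \<phi> (F n) Z eps" unfolding sep_num_sset using cSup_upper[OF P(2) bdd] .
  show "sep_num \<phi> (F n) Z eps \<le> real (card C) ^ card (F n)" unfolding sep_num_sset
    using cSup_least[of "sset (F n) eps"] P by (metis empty_iff of_nat_power)
qed

lemma sset_one: "real 1 \<in> sset A eps"
proof -
  obtain z where z: "z \<in> Z" using Zne by auto
  have "real (card {z}) \<in> sset A eps" unfolding sset_def using z by blast
  then show ?thesis by simp
qed

lemma sep_num_mono:
  assumes "0 < e1" "e1 \<le> e2"
  shows "sep_num \<phi> (F n) Z e2 \<le> sep_num \<phi> (F n) Z e1"
proof -
  obtain C where C: "finite C" "X \<subseteq> (\<Union>c\<in>C. ball c (e1/2))" "card C \<ge> 1"
    by (rule cover_eps[OF assms(1)])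
  have sub: "sset (F n) e2 \<subseteq> sset (F n) e1"
  proof
    fix v assume "v \<in> sset (F n) e2"
    then obtain S where S: "v = real (card S)" "S \<subseteq> Z" "finite S"
        "\<forall>x\<in>S. \<forall>y\<in>S. x \<noteq> y \<longrightarrow> dF \<phi> (F n) x y > e2"
      unfolding sset_def by blast
    then have "\<forall>x\<in>S. \<forall>y\<in>S. x \<noteq> y \<longrightarrow> dF \<phi> (F n) x y > e1"
      using assms(2) by (meson le_less_trans)
    then show "v \<in> sset (F n) e1" unfolding sset_def using S by blast
  qed
  have ne: "sset (F n) e2 \<noteq> {}" using sset_one by blast
  show ?thesis unfolding sep_num_sset
    by (rule cSup_subset_mono[OF ne sep_num_bounds(3)[OF C(1,2)] sub])
qed


lemma card_pos: "real (card (F n)) \<ge> 1"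
  using Ffin Fne by (simp add: Suc_leI card_gt_0_iff)

lemma term_bounds:
  assumes C: "finite C" "X \<subseteq> (\<Union>c\<in>C. ball c (eps/2))" "card C \<ge> 1"
  shows "0 \<le> ln (sep_num \<phi> (F n) Z eps)"
    "ln (sep_num \<phi> (F n) Z eps) \<le> real (card (F n)) * ln (real (card C))"
proof -
  note B = sep_num_bounds[OF C(1,2), of n]
  show "0 \<le> ln (sep_num \<phi> (F n) Z eps)" using B(1) by simp
  have "ln (sep_num \<phi> (F n) Z eps) \<le> ln (real (card C) ^ card (F n))"
    using B(1,2) by (intro ln_mono) auto
  also have "\<dots> = real (card (F n)) * ln (real (card C))"
    using C(3) by (subst ln_realpow) auto
  finally show "ln (sep_num \<phi> (F n) Z eps) \<le> real (card (F n)) * ln (real (card C))" .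
qed

lemma htop_eps_real:
  assumes "eps > 0"
  shows "\<exists>r. htop_eps \<phi> F Z eps = ereal r \<and> 0 \<le> r"
proof -
  obtain C where C: "finite C" "X \<subseteq> (\<Union>c\<in>C. ball c (eps/2))" "card C \<ge> 1"
    by (rule cover_eps[OF assms])
  let ?f = "\<lambda>n. ereal (ln (sep_num \<phi> (F n) Z eps) / real (card (F n)))"
  have lo: "0 \<le> ?f n" for n using term_bounds[OF C, of n] card_pos[of n] by simp
  have hi: "?f n \<le> ereal (ln (real (card C)))" for n
  proof -
    have "ln (sep_num \<phi> (F n) Z eps) / real (card (F n)) \<le> ln (real (card C))"
      using term_bounds(2)[OF C, of n] card_pos[of n] by (simp add: divide_le_eq mult.commute)
    then show ?thesis by simp
  qed
  have "0 \<le> limsup ?f" by (rule le_Limsup) (use lo in auto)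
  moreover have "limsup ?f \<le> ereal (ln (real (card C)))" by (rule Limsup_bounded) (use hi in auto)
  ultimately show ?thesis unfolding htop_eps_def
    by (cases "limsup ?f") auto
qed

lemma htop_eps_mono:
  assumes "0 < e1" "e1 \<le> e2"
  shows "htop_eps \<phi> F Z e2 \<le> htop_eps \<phi> F Z e1"
  unfolding htop_eps_def
proof (rule Limsup_mono, rule always_eventually, rule allI)
  fix n
  obtain C where C: "finite C" "X \<subseteq> (\<Union>c\<in>C. ball c (e2/2))" "card C \<ge> 1"
    by (rule cover_eps[of e2]) (use assms in linarith)
  have "1 \<le> sep_num \<phi> (F n) Z e2" using sep_num_bounds(1)[OF C(1,2)] by blast
  then have "ln (sep_num \<phi> (F n) Z e2) \<le> ln (sep_num \<phi> (F n) Z e1)"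
    using sep_num_mono[OF assms, of n] by simp
  then show "ereal (ln (sep_num \<phi> (F n) Z e2) / real (card (F n)))
      \<le> ereal (ln (sep_num \<phi> (F n) Z e1) / real (card (F n)))"
    using card_pos[of n] by (simp add: divide_right_mono)
qed

end

lemma ev_lt: "e0 > 0 \<Longrightarrow> \<forall>\<^sub>F x in at_right (0::real). 0 < x \<and> x < e0"
  using eventually_at_right_less[of "0::real"] order_tendstoD(2)[OF tendsto_ident_at[of "0::real" "{0<..}"], of e0]
  by (auto elim: eventually_elim2)

lemma antitone_tendsto_SUP:
  fixes f :: "real \<Rightarrow> ereal"
  assumes mono: "\<And>a b. 0 < a \<Longrightarrow> a \<le> b \<Longrightarrow> f b \<le> f a"
  shows "(f \<longlongrightarrow> (SUP e\<in>{0<..}. f e)) (at_right 0)"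
proof (rule order_tendstoI)
  fix a assume "a < (SUP e\<in>{0<..}. f e)"
  then obtain e0 where e0: "e0 > 0" "a < f e0" by (auto simp: less_SUP_iff)
  show "\<forall>\<^sub>F x in at_right 0. a < f x"
    using ev_lt[OF e0(1)] by eventually_elim (use mono e0 in \<open>auto intro: less_le_trans\<close>)
next
  fix a assume a: "(SUP e\<in>{0<..}. f e) < a"
  show "\<forall>\<^sub>F x in at_right 0. f x < a"
    using eventually_at_right_less[of "0::real"]
    by eventually_elim (metis a greaterThan_iff SUP_upper le_less_trans)
qed

lemma Inf_le_one:
  assumes "{s::real. s > 1} \<subseteq> A"
  shows "Inf (ereal ` A) \<le> 1"
proof (rule dense_ge)
  fix y :: ereal assume y: "1 < y"
  show "Inf (ereal ` A) \<le> y"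
  proof (cases y)
    case (real r)
    then have "r \<in> A" using y assms by auto
    then show ?thesis using real by (auto intro: Inf_lower)
  next
    case PInf then show ?thesis by simp
  next
    case MInf then show ?thesis using y by simp
  qed
qed

lemma one_le_Inf:
  assumes "\<And>s. s \<in> A \<Longrightarrow> (1::real) \<le> s"
  shows "1 \<le> Inf (ereal ` A)"
  using assms by (auto intro!: Inf_greatest)

lemma neg_ln_at_top: "filterlim (\<lambda>e::real. ln (1 / e)) at_top (at_right 0)"
proof -
  have "filterlim (\<lambda>e::real. - ln e) at_top (at_right 0)"
    using ln_at_0 by (simp add: filterlim_uminus_at_top)
  moreover have eq: "\<forall>\<^sub>F e in at_right (0::real). - ln e = ln (1 / e)"
    using eventually_at_right_less[of "0::real"] by eventually_elim (simp add: ln_div)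
  ultimately show ?thesis using filterlim_cong[OF refl refl eq] by simp
qed

context setting begin

lemma htop_eq_SUP: "htop \<phi> F Z = (SUP e\<in>{0<..}. htop_eps \<phi> F Z e)"
  unfolding htop_def by (rule tendsto_Lim) (simp_all add: antitone_tendsto_SUP htop_eps_mono)

lemma unbounded_of_htop:
  assumes "htop \<phi> F Z = \<infinity>"
  shows "\<forall>B. \<exists>e>0. ereal B < htop_eps \<phi> F Z e"
proof
  fix B
  have "ereal B < (SUP e\<in>{0<..}. htop_eps \<phi> F Z e)" using assms htop_eq_SUP by simp
  then show "\<exists>e>0. ereal B < htop_eps \<phi> F Z e" by (auto simp: less_SUP_iff)
qed

lemma htop_s_le1:
  assumes U: "\<forall>B. \<exists>e>0. ereal B < htop_eps \<phi> F Z e" and s: "0 < s" "s \<le> 1"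
  shows "htop_s \<phi> F Z s = \<infinity>"
proof -
  define g where "g eps = limsup (\<lambda>n. ereal (ln (sep_num \<phi> (F n) Z eps) / (real (card (F n)) powr s)))" for eps
  have ge: "htop_eps \<phi> F Z eps \<le> g eps" if eps: "eps > 0" for eps
    unfolding htop_eps_def g_def
  proof (rule Limsup_mono, rule always_eventually, rule allI)
    fix n
    obtain C where C: "finite C" "X \<subseteq> (\<Union>c\<in>C. ball c (eps/2))" "card C \<ge> 1"
      by (rule cover_eps[OF eps])
    have l0: "0 \<le> ln (sep_num \<phi> (F n) Z eps)" using term_bounds(1)[OF C] .
    have c1: "real (card (F n)) \<ge> 1" by (rule card_pos)
    have "real (card (F n)) powr s \<le> real (card (F n)) powr 1"
      using c1 s by (intro powr_mono) auto
    then have p: "real (card (F n)) powr s \<le> real (card (F n))" using c1 by simp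
    have pp: "0 < real (card (F n)) powr s" using c1 by simp
    have "ln (sep_num \<phi> (F n) Z eps) / real (card (F n)) \<le> ln (sep_num \<phi> (F n) Z eps) / real (card (F n)) powr s"
      using l0 p pp by (intro divide_left_mono) auto
    then show "ereal (ln (sep_num \<phi> (F n) Z eps) / real (card (F n)))
        \<le> ereal (ln (sep_num \<phi> (F n) Z eps) / real (card (F n)) powr s)" by simp
  qed
  have "(g \<longlongrightarrow> \<infinity>) (at_right 0)" unfolding tendsto_PInfty
  proof
    fix r
    obtain e0 where e0: "e0 > 0" "ereal r < htop_eps \<phi> F Z e0" using U by blast
    show "\<forall>\<^sub>F x in at_right 0. ereal r < g x"
      using ev_lt[OF e0(1)]
    proof eventually_elim
      case (elim x)
      then have "htop_eps \<phi> F Z e0 \<le> htop_eps \<phi> F Z x" using htop_eps_mono by auto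
      then show ?case using e0(2) ge[of x] elim by (meson less_le_trans)
    qed
  qed
  then show ?thesis unfolding htop_s_def g_def[symmetric] by (rule tendsto_Lim[rotated]) simp
qed

lemma htop_s_gt1:
  assumes card_inf: "filterlim (\<lambda>n. real (card (F n))) at_top sequentially" and s: "s > 1"
  shows "htop_s \<phi> F Z s = 0"
proof -
  have z: "limsup (\<lambda>n. ereal (ln (sep_num \<phi> (F n) Z eps) / (real (card (F n)) powr s))) = 0"
    if eps: "eps > 0" for eps
  proof -
    obtain C where C: "finite C" "X \<subseteq> (\<Union>c\<in>C. ball c (eps/2))" "card C \<ge> 1"
      by (rule cover_eps[OF eps])
    let ?a = "\<lambda>n. ln (sep_num \<phi> (F n) Z eps) / (real (card (F n)) powr s)"
    let ?b = "\<lambda>n. ln (real (card C)) * real (card (F n)) powr (1 - s)"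
    have b0: "?b \<longlonglongrightarrow> 0"
      by (rule tendsto_mult_right_zero, rule tendsto_neg_powr[OF _ card_inf]) (use s in auto)
    have lo: "0 \<le> ?a n" for n using term_bounds(1)[OF C, of n] by simp
    have hi: "?a n \<le> ?b n" for n
    proof -
      have c1: "real (card (F n)) \<ge> 1" by (rule card_pos)
      have pp: "0 < real (card (F n)) powr s" using c1 by simp
      have "?a n \<le> real (card (F n)) * ln (real (card C)) / (real (card (F n)) powr s)"
        using term_bounds(2)[OF C, of n] pp by (intro divide_right_mono) auto
      also have "\<dots> = ln (real (card C)) * (real (card (F n)) powr 1 / real (card (F n)) powr s)"
        using c1 by simp
      also have "\<dots> = ?b n" by (simp add: powr_diff)
      finally show ?thesis .
    qed
    have "?a \<longlonglongrightarrow> 0"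
      by (rule tendsto_sandwich[OF _ _ tendsto_const b0]) (use lo hi in auto)
    then have "(\<lambda>n. ereal (?a n)) \<longlonglongrightarrow> ereal 0" by (rule tendsto_ereal)
    then have "limsup (\<lambda>n. ereal (?a n)) = ereal 0" by (rule lim_imp_Limsup[rotated]) simp
    then show ?thesis by (simp add: zero_ereal_def)
  qed
  show ?thesis unfolding htop_s_def
    by (rule tendsto_Lim) (simp_all add: z eventually_at_right_less tendsto_eventually eventually_mono[OF eventually_at_right_less])
qed

end

context setting begin

lemma mdim_s_gt1:
  assumes fin: "mdim_M \<phi> F Z < \<infinity>" and s: "s > 1"
  shows "mdim_M_s \<phi> F Z s = 0"
proof -
  obtain N :: nat where N: "mdim_M \<phi> F Z < ereal (real N)"
    using fin less_PInf_Ex_of_nat by auto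
  have ev1: "\<forall>\<^sub>F e in at_right 0. htop_eps \<phi> F Z e / ereal (ln (1 / e)) < ereal (real N)"
    using Limsup_lessD[OF N[unfolded mdim_M_def]] .
  let ?b = "\<lambda>e. real N * ln (1 / e) powr (1 - s)"
  have b0: "(?b \<longlongrightarrow> 0) (at_right 0)"
    by (rule tendsto_mult_right_zero, rule tendsto_neg_powr[OF _ neg_ln_at_top]) (use s in auto)
  have b0': "((\<lambda>e. ereal (?b e)) \<longlongrightarrow> ereal 0) (at_right 0)" using b0 by (rule tendsto_ereal)
  have ev: "\<forall>\<^sub>F e in at_right 0. 0 \<le> htop_eps \<phi> F Z e / ereal (ln (1 / e) powr s) \<and>
      htop_eps \<phi> F Z e / ereal (ln (1 / e) powr s) \<le> ereal (?b e)"
    using ev1 ev_lt[OF zero_less_one]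
  proof eventually_elim
    case (elim e)
    obtain r where r: "htop_eps \<phi> F Z e = ereal r" "0 \<le> r" using htop_eps_real elim by blast
    define L where "L = ln (1 / e)"
    have L: "L > 0" using elim unfolding L_def by simp
    have Ls: "L powr s > 0" using L by simp
    have "r / L < real N" using elim(1) r L unfolding L_def[symmetric] by simp
    have eq: "r / L powr s = (r / L) * L powr (1 - s)"
      using L by (simp add: powr_diff)
    have "(r / L) * L powr (1 - s) \<le> real N * L powr (1 - s)"
      using \<open>r / L < real N\<close> by (intro mult_right_mono) auto
    then have key: "r / L powr s \<le> real N * L powr (1 - s)" using eq by linarith
    have key0: "0 \<le> r / L powr s" using r(2) Ls by simp
    have hq: "htop_eps \<phi> F Z e / ereal (L powr s) = ereal (r / L powr s)" using r Ls by simp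
    show ?case unfolding L_def[symmetric] hq using key key0 by simp
  qed
  have "mdim_M_s \<phi> F Z s \<le> Limsup (at_right 0) (\<lambda>e. ereal (?b e))"
    unfolding mdim_M_s_def by (rule Limsup_mono) (use ev in \<open>auto elim: eventually_mono\<close>)
  also have "\<dots> = 0" using lim_imp_Limsup[OF _ b0'] by (simp add: zero_ereal_def)
  finally have "mdim_M_s \<phi> F Z s \<le> 0" .
  moreover have "0 \<le> mdim_M_s \<phi> F Z s"
    unfolding mdim_M_s_def by (rule le_Limsup) (use ev in \<open>auto elim: eventually_mono\<close>)
  ultimately show ?thesis by simp
qed

lemma mdim_s_le1:
  assumes s: "0 < s" "s \<le> 1"
  shows "mdim_M \<phi> F Z \<le> mdim_M_s \<phi> F Z s"
  unfolding mdim_M_def mdim_M_s_def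
proof (rule Limsup_mono)
  show "\<forall>\<^sub>F e in at_right 0. htop_eps \<phi> F Z e / ereal (ln (1 / e))
      \<le> htop_eps \<phi> F Z e / ereal (ln (1 / e) powr s)"
    using ev_lt[OF exp_gt_zero[of "-1"]]
  proof eventually_elim
    case (elim e)
    obtain r where r: "htop_eps \<phi> F Z e = ereal r" "0 \<le> r" using htop_eps_real elim by blast
    define L where "L = ln (1 / e)"
    have "ln e < -1" using elim by (metis ln_less_cancel_iff exp_gt_zero ln_exp)
    then have L: "L > 1" using elim unfolding L_def by (simp add: ln_div)
    have Ls: "L powr s > 0" using L by simp
    have "L powr s \<le> L powr 1" using L s by (intro powr_mono) auto
    then have "L powr s \<le> L" using L by simp
    then have key: "r / L \<le> r / L powr s" using r(2) Ls L by (intro divide_left_mono) (auto intro: mult_pos_pos)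
    have hq: "htop_eps \<phi> F Z e / ereal (L powr s) = ereal (r / L powr s)" using r Ls by simp
    have hq1: "htop_eps \<phi> F Z e / ereal L = ereal (r / L)" using r L by simp
    show ?case unfolding L_def[symmetric] hq hq1 using key by simp
  qed
qed

lemma unbounded_of_mdim:
  assumes pos: "0 < mdim_M \<phi> F Z"
  shows "\<forall>B. \<exists>e>0. ereal B < htop_eps \<phi> F Z e"
proof (rule ccontr)
  assume "\<not> ?thesis"
  then obtain B where B0: "\<not> (\<exists>e>0. ereal B < htop_eps \<phi> F Z e)" by blast
  then have B: "\<And>e. e > 0 \<Longrightarrow> htop_eps \<phi> F Z e \<le> ereal B" by (meson not_less)
  let ?b = "\<lambda>e. B / ln (1 / e)"
  have b0: "(?b \<longlongrightarrow> 0) (at_right 0)"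
    by (rule tendsto_divide_0[OF tendsto_const filterlim_at_top_imp_at_infinity[OF neg_ln_at_top]])
  have b0': "((\<lambda>e. ereal (?b e)) \<longlongrightarrow> ereal 0) (at_right 0)" using b0 by (rule tendsto_ereal)
  have ev: "\<forall>\<^sub>F e in at_right 0. htop_eps \<phi> F Z e / ereal (ln (1 / e)) \<le> ereal (?b e)"
    using ev_lt[OF zero_less_one]
  proof eventually_elim
    case (elim e)
    obtain r where r: "htop_eps \<phi> F Z e = ereal r" "0 \<le> r" using htop_eps_real elim by blast
    have rB: "r \<le> B" using B[of e] r elim by simp
    define L where "L = ln (1 / e)"
    have L: "L > 0" using elim unfolding L_def by simp
    have "r / L \<le> B / L" using rB L by (simp add: divide_right_mono)
    then show ?case using r L unfolding L_def[symmetric] by simp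
  qed
  have "mdim_M \<phi> F Z \<le> Limsup (at_right 0) (\<lambda>e. ereal (?b e))"
    unfolding mdim_M_def by (rule Limsup_mono[OF ev])
  also have "\<dots> = 0" using lim_imp_Limsup[OF _ b0'] by (simp add: zero_ereal_def)
  finally show False using pos by simp
qed

end

context group begin

lemma coset_overlap_count:
  assumes K: "finite K" "K \<subseteq> carrier G" and A: "finite A" "A \<subseteq> carrier G"
  shows "(\<Sum>g\<in>K. card (A \<inter> (g <#\<^bsub>G\<^esub> A))) \<le> card A * card A"
proof -
  have "(\<Sum>g\<in>K. card (A \<inter> (g <#\<^bsub>G\<^esub> A))) = card (SIGMA g:K. A \<inter> (g <#\<^bsub>G\<^esub> A))"
    using K A by (subst card_SigmaI) auto
  also have "\<dots> \<le> card (A \<times> A)"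
  proof (rule card_inj_on_le[where f = "\<lambda>(g,y). (inv g \<otimes> y, y)"])
    show "inj_on (\<lambda>(g, y). (inv g \<otimes> y, y)) (SIGMA g:K. A \<inter> (g <#\<^bsub>G\<^esub> A))"
    proof -
      have "g = g'" if h: "g \<in> K" "y \<in> A" "g' \<in> K" "inv g \<otimes> y = inv g' \<otimes> y" for g y g'
      proof -
        have c: "g \<in> carrier G" "g' \<in> carrier G" "y \<in> carrier G" using h K A by auto
        then have "inv g = inv g'" using h(4) by (metis inv_closed right_cancel)
        then show "g = g'" using c by (metis inv_inv)
      qed
      then show ?thesis unfolding inj_on_def by auto
    qed
    show "(\<lambda>(g, y). (inv g \<otimes> y, y)) ` (SIGMA g:K. A \<inter> (g <#\<^bsub>G\<^esub> A)) \<subseteq> A \<times> A"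
    proof -
      have "inv g \<otimes> y \<in> A" if h: "g \<in> K" "y \<in> A" "y \<in> g <#\<^bsub>G\<^esub> A" for g y
      proof -
        obtain x where x: "x \<in> A" "y = g \<otimes> x" using h(3) unfolding l_coset_def by auto
        have "g \<in> carrier G" "x \<in> carrier G" using h x K A by auto
        then have "inv g \<otimes> y = x" using x by (simp add: m_assoc[symmetric])
        then show "inv g \<otimes> y \<in> A" using x by simp
      qed
      then show ?thesis by auto
    qed
    show "finite (A \<times> A)" using A by simp
  qed
  also have "\<dots> = card A * card A" by (simp add: card_cartesian_product)
  finally show ?thesis .
qed

end

lemma folner_card_tendsto:
  assumes G: "group G" and inf: "infinite (carrier G)" and fol: "folner G F"
  shows "filterlim (\<lambda>n. real (card (F n))) at_top sequentially"
proof -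
  have Fp: "F n \<subseteq> carrier G" "finite (F n)" "F n \<noteq> {}" for n using fol unfolding folner_def by auto
  have lim: "\<And>g. g \<in> carrier G \<Longrightarrow> (\<lambda>n. real (card (((g <#\<^bsub>G\<^esub> F n) - F n) \<union> (F n - (g <#\<^bsub>G\<^esub> F n))))
             / real (card (F n))) \<longlonglongrightarrow> 0" using fol unfolding folner_def by auto
  have key: "\<forall>\<^sub>F n in sequentially. real (card K) < 2 * real (card (F n))"
    if K: "finite K" "K \<subseteq> carrier G" "K \<noteq> {}" for K
  proof -
    have "\<forall>\<^sub>F n in sequentially. \<forall>g\<in>K. real (card (((g <#\<^bsub>G\<^esub> F n) - F n) \<union> (F n - (g <#\<^bsub>G\<^esub> F n))))
             / real (card (F n)) < 1/2"
      using K by (intro eventually_ball_finite ballI order_tendstoD(2)[OF lim]) auto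
    then show ?thesis
    proof (rule eventually_mono)
      fix n assume h: "\<forall>g\<in>K. real (card (((g <#\<^bsub>G\<^esub> F n) - F n) \<union> (F n - (g <#\<^bsub>G\<^esub> F n))))
             / real (card (F n)) < 1/2"
      let ?A = "F n"
      have cA: "real (card ?A) > 0" using Fp[of n] by (simp add: card_gt_0_iff)
      have each: "real (card ?A) / 2 < real (card (?A \<inter> (g <#\<^bsub>G\<^esub> ?A)))" if g: "g \<in> K" for g
      proof -
        have fin: "finite (g <#\<^bsub>G\<^esub> ?A)" using Fp[of n] unfolding l_coset_def by auto
        have "real (card (?A - (g <#\<^bsub>G\<^esub> ?A))) \<le> real (card (((g <#\<^bsub>G\<^esub> ?A) - ?A) \<union> (?A - (g <#\<^bsub>G\<^esub> ?A))))"
          using fin Fp[of n] by (intro of_nat_mono card_mono) auto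
        also have "\<dots> < real (card ?A) / 2" using h g cA by (simp add: divide_less_eq)
        finally have "real (card (?A - (g <#\<^bsub>G\<^esub> ?A))) < real (card ?A) / 2" .
        moreover have "card ?A = card (?A - (g <#\<^bsub>G\<^esub> ?A)) + card (?A \<inter> (g <#\<^bsub>G\<^esub> ?A))"
          using card_Int_Diff[OF Fp(2)[of n], of "g <#\<^bsub>G\<^esub> ?A"] by simp
        ultimately show ?thesis by linarith
      qed
      have "real (card K) * (real (card ?A) / 2) < (\<Sum>g\<in>K. real (card (?A \<inter> (g <#\<^bsub>G\<^esub> ?A))))"
        using sum_strict_mono[OF K(1) K(3) each] by simp
      also have "\<dots> \<le> real (card ?A * card ?A)"
        using group.coset_overlap_count[OF G K(1,2) Fp(2)[of n] Fp(1)[of n]]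
        by (simp only: of_nat_sum[symmetric] of_nat_le_iff)
      finally have "real (card K) * (real (card ?A) / 2) < real (card ?A) * real (card ?A)" by simp
      then show "real (card K) < 2 * real (card ?A)" using cA by (simp add: field_simps)
    qed
  qed
  show ?thesis unfolding filterlim_at_top
  proof (intro allI)
    fix M :: real
    obtain K where K: "K \<subseteq> carrier G" "finite K" "card K = Suc (nat \<lceil>2 * M\<rceil>)"
      using infinite_arbitrarily_large[OF inf] by blast
    have "K \<noteq> {}" using K(3) by auto
    then have ev: "\<forall>\<^sub>F n in sequentially. real (card K) < 2 * real (card (F n))"
      using key[OF K(2,1)] by blast
    have cK: "real (card K) \<ge> 2 * M" using K(3) by (simp, linarith)
    show "\<forall>\<^sub>F n in sequentially. M \<le> real (card (F n))"
      using ev by eventually_elim (use cK in linarith)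
  qed
qed


theorem mainTheorem12:
  fixes G :: "('g, 'b) monoid_scheme"
    and \<phi> :: "'g \<Rightarrow> 'x::metric_space \<Rightarrow> 'x"
    and X Z :: "'x set"
    and F :: "nat \<Rightarrow> 'g set"
  assumes "group G" and "countable (carrier G)" and "infinite (carrier G)" and "amenable G"
    and "compact X"
    and "group_action G X \<phi>"
    and "\<forall>g\<in>carrier G. continuous_on X (\<phi> g)"
    and "folner G F"
    and "Z \<subseteq> X" and "Z \<noteq> {}"
  shows "(htop \<phi> F Z = \<infinity> \<and> mdim_M \<phi> F Z < \<infinity> \<longrightarrow>
            D_M \<phi> F Z \<le> 1 \<and> 1 \<le> entropy_dim \<phi> F Z)
       \<and> (0 < mdim_M \<phi> F Z \<and> mdim_M \<phi> F Z < \<infinity> \<longrightarrow>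
            D_M \<phi> F Z = 1 \<and> entropy_dim \<phi> F Z = 1)"
proof -
  have Fp: "F n \<subseteq> carrier G" "finite (F n)" "F n \<noteq> {}" for n
    using assms(8) unfolding folner_def by auto
  interpret S: setting \<phi> X Z F
  proof
    show "compact X" "Z \<subseteq> X" "Z \<noteq> {}" using assms(5,9,10) by simp_all
    show "finite (F n)" "F n \<noteq> {}" for n using Fp by auto
    show "\<phi> g x \<in> X" if "g \<in> F n" "x \<in> X" for n g x
      using group_action.element_image[OF assms(6), of g x "\<phi> g x"] Fp(1)[of n] that by auto
  qed
  have card_inf: "filterlim (\<lambda>n. real (card (F n))) at_top sequentially"
    by (rule folner_card_tendsto[OF assms(1) assms(3) assms(8)])
  have Dle: "D_M \<phi> F Z \<le> 1" if "mdim_M \<phi> F Z < \<infinity>"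
    unfolding D_M_def by (rule Inf_le_one) (use S.mdim_s_gt1[OF that] in auto)
  have Ege: "1 \<le> entropy_dim \<phi> F Z" if U: "\<forall>B. \<exists>e>0. ereal B < htop_eps \<phi> F Z e"
    unfolding entropy_dim_def
  proof (rule one_le_Inf)
    fix s assume s: "s \<in> {s. 0 < s \<and> htop_s \<phi> F Z s = 0}"
    show "1 \<le> s"
    proof (rule ccontr)
      assume "\<not> 1 \<le> s"
      then have "htop_s \<phi> F Z s = \<infinity>" using S.htop_s_le1[OF U] s by auto
      then show False using s by simp
    qed
  qed
  have part1: "D_M \<phi> F Z \<le> 1 \<and> 1 \<le> entropy_dim \<phi> F Z"
    if "htop \<phi> F Z = \<infinity>" "mdim_M \<phi> F Z < \<infinity>"
    using Dle[OF that(2)] Ege[OF S.unbounded_of_htop[OF that(1)]] by simp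
  have part2: "D_M \<phi> F Z = 1 \<and> entropy_dim \<phi> F Z = 1"
    if pos: "0 < mdim_M \<phi> F Z" and fin: "mdim_M \<phi> F Z < \<infinity>"
  proof
    have "1 \<le> D_M \<phi> F Z" unfolding D_M_def
    proof (rule one_le_Inf)
      fix s assume s: "s \<in> {s. 0 < s \<and> mdim_M_s \<phi> F Z s = 0}"
      show "1 \<le> s"
      proof (rule ccontr)
        assume "\<not> 1 \<le> s"
        then have "mdim_M \<phi> F Z \<le> mdim_M_s \<phi> F Z s" using S.mdim_s_le1[of s] s by simp
        then show False using s pos by simp
      qed
    qed
    then show "D_M \<phi> F Z = 1" using Dle[OF fin] by simp
    have "entropy_dim \<phi> F Z \<le> 1" unfolding entropy_dim_def
      by (rule Inf_le_one) (use S.htop_s_gt1[OF card_inf] in auto)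
    then show "entropy_dim \<phi> F Z = 1" using Ege[OF S.unbounded_of_mdim[OF pos]] by simp
  qed
  show ?thesis using part1 part2 by blast
qed

end
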